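(* Let $M=uI+N\in F(\mathcal{R})$, where $u$ is a positive unit of $\mathcal{R}$ and $N$ is the $2\times2$ matrix with rows $\lambda_1v$ and $\lambda_2v$, $v=(1-x,1-y)$, $\lambda_1,\lambda_2\in\mathcal{R}$, $\lambda_1(1-x)+\lambda_2(1-y)=1-u$. Then (i) $M^n=u^nI+(1+u+u^2+\dots+u^{n-1})N$ for every integer $n>1$; (ii) if $M$ lies in the commutator subgroup of $F(\mathcal{R})$ then $\lambda_1,\lambda_2\in\Sigma$; more generally, if $M$ lies in the $j$-th term $F(\mathcal{R})_j$ of the lower central series of $F(\mathcal{R})$ ($j\ge1$), then $\lambda_1,\lambda_2\in\Sigma^{j-1}$.
   Context: $\mathcal{R}=\mathbb{Z}[x,x^{-1},y,y^{-1}]$; positive units are the monomials $x^iy^j$; $\Sigma$ is the augmentation ideal of $\mathcal{R}$ (kernel of $x,y\mapsto1$ to $\mathbb{Z}$), with $\Sigma^0=\mathcal{R}$. $F(\mathcal{R})$ is the subgroup of $GL_2(\mathcal{R})$ generated by $M_1=\begin{pmatrix}1&1-y\\0&x\end{pmatrix}$ and $M_2=\begin{pmatrix}y&0\\1-x&1\end{pmatrix}$. Every element of $F(\mathcal{R})$ has the form $uI+N$ described in the claim (and $u,\lambda_1,\lambda_2$ are determined by the element). The lower central series is $G_1=G$, $G_j=[G,G_{j-1}]$. *)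

theory Defs
  imports "HOL-Library.Poly_Mapping" "HOL-Library.Product_Plus"
          "HOL-Algebra.Generated_Groups"
begin

text \<open>The ring R = Z[x,x^-1,y,y^-1] of integral Laurent polynomials in two variables,
  realised as finitely supported functions Z x Z -> Z (the coefficient of x^i y^j is
  the value at (i,j)); multiplication is convolution.\<close>
type_synonym laurent = "(int \<times> int) \<Rightarrow>\<^sub>0 int"

definition X :: laurent where "X = Poly_Mapping.single (1, 0) 1"
definition Y :: laurent where "Y = Poly_Mapping.single (0, 1) 1"

definition pos_unit :: "laurent \<Rightarrow> bool" where
  "pos_unit u \<longleftrightarrow> (\<exists>i j :: int. u = Poly_Mapping.single (i, j) 1)"

definition aug :: "laurent \<Rightarrow> int" where
  "aug p = (\<Sum>k\<in>Poly_Mapping.keys p. Poly_Mapping.lookup p k)"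

definition Sigma_ideal :: "laurent set" where
  "Sigma_ideal = {p. aug p = 0}"

inductive in_Sigma_pow :: "nat \<Rightarrow> laurent \<Rightarrow> bool" where
  pow0: "in_Sigma_pow 0 p"
| zero: "in_Sigma_pow (Suc k) 0"
| prod: "a \<in> Sigma_ideal \<Longrightarrow> in_Sigma_pow k b \<Longrightarrow> in_Sigma_pow (Suc k) (a * b)"
| add: "in_Sigma_pow (Suc k) p \<Longrightarrow> in_Sigma_pow (Suc k) q \<Longrightarrow> in_Sigma_pow (Suc k) (p + q)"

definition Sigma_pow :: "nat \<Rightarrow> laurent set" where
  "Sigma_pow j = {p. in_Sigma_pow j p}"

text \<open>2x2 matrices over R: M2 a b c d is the matrix with rows (a,b) and (c,d).\<close>
datatype mat2 = M2 laurent laurent laurent laurent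

fun mmul :: "mat2 \<Rightarrow> mat2 \<Rightarrow> mat2" where
  "mmul (M2 a b c d) (M2 e f g h) =
     M2 (a * e + b * g) (a * f + b * h) (c * e + d * g) (c * f + d * h)"

fun madd :: "mat2 \<Rightarrow> mat2 \<Rightarrow> mat2" where
  "madd (M2 a b c d) (M2 e f g h) = M2 (a + e) (b + f) (c + g) (d + h)"

fun msmult :: "laurent \<Rightarrow> mat2 \<Rightarrow> mat2" where
  "msmult s (M2 a b c d) = M2 (s * a) (s * b) (s * c) (s * d)"

definition mid :: mat2 where "mid = M2 1 0 0 1"

definition Mat2 :: "mat2 monoid" where
  "Mat2 = \<lparr>carrier = UNIV, mult = mmul, one = mid\<rparr>"

definition GL2 :: "mat2 monoid" where
  "GL2 = units_of Mat2"

definition Mgen1 :: mat2 where "Mgen1 = M2 1 (1 - Y) 0 X"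
definition Mgen2 :: mat2 where "Mgen2 = M2 Y 0 (1 - X) 1"

definition FR :: "mat2 set" where
  "FR = generate GL2 {Mgen1, Mgen2}"

text \<open>Lower central series: LCS 1 = F(R), LCS (j+1) = [F(R), LCS j]
  (subgroup generated by commutators). Index 0 is an unused convention.\<close>
fun LCS :: "nat \<Rightarrow> mat2 set" where
  "LCS 0 = FR"
| "LCS (Suc 0) = FR"
| "LCS (Suc (Suc j)) = generate GL2
     {g \<otimes>\<^bsub>GL2\<^esub> h \<otimes>\<^bsub>GL2\<^esub> inv\<^bsub>GL2\<^esub> g \<otimes>\<^bsub>GL2\<^esub> inv\<^bsub>GL2\<^esub> h | g h. g \<in> FR \<and> h \<in> LCS (Suc j)}"

definition Nmat :: "laurent \<Rightarrow> laurent \<Rightarrow> mat2" where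
  "Nmat l1 l2 = M2 (l1 * (1 - X)) (l1 * (1 - Y)) (l2 * (1 - X)) (l2 * (1 - Y))"

end

theory Submission
  imports Defs "HOL-Library.Product_Lexorder"
begin

instance prod :: (linordered_ab_group_add, linordered_ab_group_add) ordered_cancel_comm_monoid_add
  by standard (auto simp: less_eq_prod_def)

definition E :: "laurent \<Rightarrow> laurent \<Rightarrow> laurent \<Rightarrow> mat2" where
  "E u l1 l2 = madd (msmult u mid) (Nmat l1 l2)"

lemma E_eq: "E u l1 l2 = M2 (u + l1*(1-X)) (l1*(1-Y)) (l2*(1-X)) (u + l2*(1-Y))"
  by (simp add: E_def mid_def Nmat_def)

definition good :: "laurent \<Rightarrow> laurent \<Rightarrow> laurent \<Rightarrow> bool" where
  "good u l1 l2 \<longleftrightarrow> pos_unit u \<and> l1*(1-X)+l2*(1-Y) = 1-u"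

lemma E_mult:
  assumes "m1*(1-X)+m2*(1-Y) = 1-w"
  shows "mmul (E u l1 l2) (E w m1 m2) = E (u*w) (l1 + u*m1) (l2 + u*m2)"
  unfolding E_eq mmul.simps mat2.inject
  by (intro conjI; use assms in algebra)

lemma E_one: "E 1 0 0 = mid"
  by (simp add: E_eq mid_def)

lemma mmul_assoc: "mmul (mmul a b) c = mmul a (mmul b c)"
  by (cases a; cases b; cases c) (simp add: algebra_simps)

lemma monoid_Mat2: "monoid Mat2"
  unfolding Mat2_def
  apply unfold_locales
     apply (auto simp: mmul_assoc)
  subgoal for x by (cases x) (simp add: mid_def)
  subgoal for x by (cases x) (simp add: mid_def)
  done

lemma GL2_mult: "x \<otimes>\<^bsub>GL2\<^esub> y = mmul x y"
  by (simp add: GL2_def units_of_mult Mat2_def)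

lemma GL2_one: "\<one>\<^bsub>GL2\<^esub> = mid"
  by (simp add: GL2_def units_of_one Mat2_def)

lemma one_single: "Poly_Mapping.single (0,0) (1::int) = (1::laurent)"
  by (metis single_one zero_prod_def)

lemma pos_unit_one: "pos_unit 1"
  unfolding pos_unit_def using one_single by metis

lemma pos_unit_mult: "pos_unit u \<Longrightarrow> pos_unit w \<Longrightarrow> pos_unit (u*w)"
proof -
  assume "pos_unit u" "pos_unit w"
  then obtain i j i' j' where "u = Poly_Mapping.single (i,j) 1" "w = Poly_Mapping.single (i',j') 1"
    unfolding pos_unit_def by blast
  then have "u*w = Poly_Mapping.single (i+i',j+j') 1" by (simp add: mult_single)
  then show ?thesis unfolding pos_unit_def by blast
qed

lemma pos_unit_inv: "pos_unit u \<Longrightarrow> \<exists>u'. pos_unit u' \<and> u*u' = 1"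
proof -
  assume "pos_unit u"
  then obtain i j where u: "u = Poly_Mapping.single (i,j) 1" unfolding pos_unit_def by blast
  let ?u' = "Poly_Mapping.single (-i,-j) 1 :: laurent"
  have "u * ?u' = 1" unfolding u mult_single using one_single by simp
  moreover have "pos_unit ?u'" unfolding pos_unit_def by blast
  ultimately show ?thesis by blast
qed

lemma inv_E:
  assumes g: "good u l1 l2" and uu: "u*u' = 1"
  shows "E u l1 l2 \<in> carrier GL2 \<and> inv\<^bsub>GL2\<^esub> (E u l1 l2) = E u' (-(u'*l1)) (-(u'*l2))"
proof -
  let ?g = "E u l1 l2" and ?g' = "E u' (-(u'*l1)) (-(u'*l2))"
  have c1: "l1*(1-X)+l2*(1-Y) = 1-u" using g good_def by blast
  have c2: "(-(u'*l1))*(1-X)+(-(u'*l2))*(1-Y) = 1-u'" using c1 uu by algebra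
  have m1: "mmul ?g ?g' = mid"
    unfolding E_mult[OF c2] E_one[symmetric] using uu by (simp add: algebra_simps)
  have m2: "mmul ?g' ?g = mid"
    unfolding E_mult[OF c1] E_one[symmetric] using uu by (simp add: algebra_simps)
  have U: "?g \<in> Units Mat2" unfolding Units_def using m1 m2 by (auto simp: Mat2_def)
  have "?g' = inv\<^bsub>Mat2\<^esub> ?g"
    using monoid.inv_unique'[OF monoid_Mat2, of ?g ?g'] m1 m2 by (simp add: Mat2_def)
  moreover have "inv\<^bsub>GL2\<^esub> ?g = inv\<^bsub>Mat2\<^esub> ?g"
    unfolding GL2_def using monoid.units_of_inv[OF monoid_Mat2 U] .
  ultimately show ?thesis using U by (simp add: GL2_def units_of_carrier)
qed

lemma inv_good: "good u l1 l2 \<Longrightarrow> \<exists>u' m1 m2. good u' m1 m2 \<and> inv\<^bsub>GL2\<^esub> (E u l1 l2) = E u' m1 m2"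
proof -
  assume g: "good u l1 l2"
  then obtain u' where u': "pos_unit u'" "u*u' = 1" using pos_unit_inv good_def by blast
  have c1: "l1*(1-X)+l2*(1-Y) = 1-u" using g good_def by blast
  have c2: "(-(u'*l1))*(1-X)+(-(u'*l2))*(1-Y) = 1-u'" using c1 u' by algebra
  show ?thesis using inv_E[OF g u'(2)] c2 u'(1) good_def by blast
qed

lemma FR_A: "M \<in> FR \<Longrightarrow> \<exists>u l1 l2. good u l1 l2 \<and> M = E u l1 l2"
  unfolding FR_def
proof (induction rule: generate.induct)
  case one
  then show ?case using E_one pos_unit_one GL2_one by (metis good_def add_0 diff_self mult_zero_left)
next
  case (incl h)
  have g1: "good X 1 0" "Mgen1 = E X 1 0"
    by (auto simp: good_def E_eq Mgen1_def pos_unit_def X_def)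
  have g2: "good Y 0 1" "Mgen2 = E Y 0 1"
    by (auto simp: good_def E_eq Mgen2_def pos_unit_def Y_def)
  show ?case using incl g1 g2 by blast
next
  case (inv h)
  have g1: "good X 1 0" "Mgen1 = E X 1 0"
    by (auto simp: good_def E_eq Mgen1_def pos_unit_def X_def)
  have g2: "good Y 0 1" "Mgen2 = E Y 0 1"
    by (auto simp: good_def E_eq Mgen2_def pos_unit_def Y_def)
  show ?case using inv g1 g2 inv_good by (metis insert_iff singletonD)
next
  case (eng h1 h2)
  then obtain u l1 l2 w m1 m2 where a: "good u l1 l2" "h1 = E u l1 l2" "good w m1 m2" "h2 = E w m1 m2"
    by blast
  have c1: "l1*(1-X)+l2*(1-Y) = 1-u" and c2: "m1*(1-X)+m2*(1-Y) = 1-w"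
    using a good_def by blast+
  have c3: "(l1 + u*m1)*(1-X) + (l2 + u*m2)*(1-Y) = 1 - u*w" using c1 c2 by algebra
  have "good (u*w) (l1 + u*m1) (l2 + u*m2)"
    using c3 a pos_unit_mult good_def by blast
  then show ?case using a E_mult[OF c2] GL2_mult by metis
qed

lemma aug_sum: "finite S \<Longrightarrow> Poly_Mapping.keys p \<subseteq> S \<Longrightarrow> aug p = sum (Poly_Mapping.lookup p) S"
  unfolding aug_def
proof -
  assume f: "finite S" and k: "Poly_Mapping.keys p \<subseteq> S"
  show "sum (Poly_Mapping.lookup p) (Poly_Mapping.keys p) = sum (Poly_Mapping.lookup p) S"
    by (rule sum.mono_neutral_left[OF f k]) (simp add: in_keys_iff)
qed

lemma aug_diff: "aug (p - q) = aug p - aug q"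
proof -
  let ?S = "Poly_Mapping.keys p \<union> Poly_Mapping.keys q"
  have f: "finite ?S" by simp
  have "aug (p - q) = sum (Poly_Mapping.lookup (p - q)) ?S"
    using aug_sum[OF f keys_diff] .
  also have "\<dots> = sum (Poly_Mapping.lookup p) ?S - sum (Poly_Mapping.lookup q) ?S"
    by (simp add: lookup_minus sum_subtractf)
  also have "\<dots> = aug p - aug q" using aug_sum[OF f, of p] aug_sum[OF f, of q] by simp
  finally show ?thesis .
qed

lemma aug_single: "aug (Poly_Mapping.single k 1) = 1"
  by (simp add: aug_def)

lemma one_minus_unit: "pos_unit u \<Longrightarrow> 1 - u \<in> Sigma_ideal"
proof -
  assume "pos_unit u"
  then obtain i j where u: "u = Poly_Mapping.single (i,j) 1" unfolding pos_unit_def by blast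
  have "aug (1 - u) = aug 1 - aug u" by (rule aug_diff)
  also have "\<dots> = 0" unfolding u one_single[symmetric] aug_single by simp
  finally show ?thesis unfolding Sigma_ideal_def by simp
qed

lemma Sigma_neg: "in_Sigma_pow k p \<Longrightarrow> in_Sigma_pow k (-p)"
proof (induction rule: in_Sigma_pow.induct)
  case (pow0 p) then show ?case by (rule in_Sigma_pow.pow0)
next
  case (zero k) then show ?case using in_Sigma_pow.zero by simp
next
  case (prod a k b) then show ?case using in_Sigma_pow.prod[of a k "-b"] by simp
next
  case (add k p q) then show ?case using in_Sigma_pow.add[of k "-p" "-q"] by (simp add: add.commute)
qed

definition S :: "nat \<Rightarrow> mat2 set" where
  "S k = {M. \<exists>l1 l2. in_Sigma_pow k l1 \<and> in_Sigma_pow k l2 \<and> l1*(1-X)+l2*(1-Y) = 0 \<and> M = E 1 l1 l2}"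

lemma gen_S:
  assumes H: "\<And>c. c \<in> H \<Longrightarrow> c \<in> S (Suc k)" and M: "M \<in> generate GL2 H"
  shows "M \<in> S (Suc k)"
  using M
proof (induction rule: generate.induct)
  case one
  have "mid = E 1 0 0" using E_one by simp
  then show ?case unfolding S_def GL2_one using in_Sigma_pow.zero by fastforce
next
  case (incl h) then show ?case using H by blast
next
  case (inv h)
  then obtain l1 l2 where a: "in_Sigma_pow (Suc k) l1" "in_Sigma_pow (Suc k) l2"
      "l1*(1-X)+l2*(1-Y) = 0" "h = E 1 l1 l2"
    using H unfolding S_def by blast
  have g: "good 1 l1 l2" using a pos_unit_one good_def by simp
  have "inv\<^bsub>GL2\<^esub> h = E 1 (-l1) (-l2)" using inv_E[OF g, of 1] a by simp
  moreover have "(-l1)*(1-X)+(-l2)*(1-Y) = 0" using a(3) by algebra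
  ultimately show ?case unfolding S_def using a Sigma_neg by blast
next
  case (eng h1 h2)
  then obtain l1 l2 m1 m2 where a: "in_Sigma_pow (Suc k) l1" "in_Sigma_pow (Suc k) l2"
      "l1*(1-X)+l2*(1-Y) = 0" "h1 = E 1 l1 l2"
      "in_Sigma_pow (Suc k) m1" "in_Sigma_pow (Suc k) m2"
      "m1*(1-X)+m2*(1-Y) = 0" "h2 = E 1 m1 m2"
    unfolding S_def by blast
  have c: "m1*(1-X)+m2*(1-Y) = 1-1" using a by simp
  have "h1 \<otimes>\<^bsub>GL2\<^esub> h2 = E 1 (l1+m1) (l2+m2)"
    unfolding GL2_mult a(4) a(8) E_mult[OF c] by simp
  moreover have "(l1+m1)*(1-X)+(l2+m2)*(1-Y) = 0" using a(3) a(7) by algebra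
  ultimately show ?case unfolding S_def using a in_Sigma_pow.add by blast
qed

lemma comm_S:
  assumes g: "good u l1 l2" and h: "good w m1 m2"
    and s1: "in_Sigma_pow k ((1-w)*l1 + (u-1)*m1)" and s2: "in_Sigma_pow k ((1-w)*l2 + (u-1)*m2)"
  shows "E u l1 l2 \<otimes>\<^bsub>GL2\<^esub> E w m1 m2 \<otimes>\<^bsub>GL2\<^esub> inv\<^bsub>GL2\<^esub> (E u l1 l2)
           \<otimes>\<^bsub>GL2\<^esub> inv\<^bsub>GL2\<^esub> (E w m1 m2) \<in> S k"
proof -
  obtain u' where u': "u*u' = 1" using pos_unit_inv g good_def by blast
  obtain w' where w': "w*w' = 1" using pos_unit_inv h good_def by blast
  have c1: "l1*(1-X)+l2*(1-Y) = 1-u" using g good_def by blast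
  have c2: "m1*(1-X)+m2*(1-Y) = 1-w" using h good_def by blast
  have c3: "(-(u'*l1))*(1-X)+(-(u'*l2))*(1-Y) = 1-u'" using c1 u' by algebra
  have c4: "(-(w'*m1))*(1-X)+(-(w'*m2))*(1-Y) = 1-w'" using c2 w' by algebra
  have "E u l1 l2 \<otimes>\<^bsub>GL2\<^esub> E w m1 m2 \<otimes>\<^bsub>GL2\<^esub> inv\<^bsub>GL2\<^esub> (E u l1 l2)
           \<otimes>\<^bsub>GL2\<^esub> inv\<^bsub>GL2\<^esub> (E w m1 m2)
     = mmul (mmul (mmul (E u l1 l2) (E w m1 m2)) (E u' (-(u'*l1)) (-(u'*l2)))) (E w' (-(w'*m1)) (-(w'*m2)))"
    using inv_E[OF g u'] inv_E[OF h w'] by (simp add: GL2_mult)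
  also have "\<dots> = E (u*w*u'*w') (l1 + u*m1 + u*w*(-(u'*l1)) + u*w*u'*(-(w'*m1)))
                     (l2 + u*m2 + u*w*(-(u'*l2)) + u*w*u'*(-(w'*m2)))"
    unfolding E_mult[OF c2] E_mult[OF c3] E_mult[OF c4] by (simp add: algebra_simps)
  also have "\<dots> = E 1 ((1-w)*l1 + (u-1)*m1) ((1-w)*l2 + (u-1)*m2)"
  proof -
    have "u*w*u'*w' = 1" using u' w' by algebra
    moreover have "l1 + u*m1 + u*w*(-(u'*l1)) + u*w*u'*(-(w'*m1)) = (1-w)*l1 + (u-1)*m1"
      using u' w' by algebra
    moreover have "l2 + u*m2 + u*w*(-(u'*l2)) + u*w*u'*(-(w'*m2)) = (1-w)*l2 + (u-1)*m2"
      using u' w' by algebra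
    ultimately show ?thesis by simp
  qed
  finally have eq: "E u l1 l2 \<otimes>\<^bsub>GL2\<^esub> E w m1 m2 \<otimes>\<^bsub>GL2\<^esub> inv\<^bsub>GL2\<^esub> (E u l1 l2)
           \<otimes>\<^bsub>GL2\<^esub> inv\<^bsub>GL2\<^esub> (E w m1 m2) = E 1 ((1-w)*l1 + (u-1)*m1) ((1-w)*l2 + (u-1)*m2)" .
  have c: "((1-w)*l1 + (u-1)*m1)*(1-X) + ((1-w)*l2 + (u-1)*m2)*(1-Y) = 0"
    using c1 c2 by algebra
  show ?thesis unfolding S_def eq using s1 s2 c by blast
qed

lemma LCS_S: "M \<in> LCS (Suc (Suc j)) \<Longrightarrow> M \<in> S (Suc j)"
proof (induction j arbitrary: M)
  case 0
  show ?case
  proof (rule gen_S[of _ 0])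
    show "M \<in> generate GL2 {g \<otimes>\<^bsub>GL2\<^esub> h \<otimes>\<^bsub>GL2\<^esub> inv\<^bsub>GL2\<^esub> g \<otimes>\<^bsub>GL2\<^esub> inv\<^bsub>GL2\<^esub> h | g h. g \<in> FR \<and> h \<in> LCS (Suc 0)}"
      using 0 by simp
  next
    fix c assume "c \<in> {g \<otimes>\<^bsub>GL2\<^esub> h \<otimes>\<^bsub>GL2\<^esub> inv\<^bsub>GL2\<^esub> g \<otimes>\<^bsub>GL2\<^esub> inv\<^bsub>GL2\<^esub> h | g h. g \<in> FR \<and> h \<in> LCS (Suc 0)}"
    then obtain g h where c: "c = g \<otimes>\<^bsub>GL2\<^esub> h \<otimes>\<^bsub>GL2\<^esub> inv\<^bsub>GL2\<^esub> g \<otimes>\<^bsub>GL2\<^esub> inv\<^bsub>GL2\<^esub> h"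
      and gh: "g \<in> FR" "h \<in> FR" by auto
    obtain u l1 l2 where g: "good u l1 l2" "g = E u l1 l2" using FR_A gh by blast
    obtain w m1 m2 where h: "good w m1 m2" "h = E w m1 m2" using FR_A gh by blast
    have su: "1 - u \<in> Sigma_ideal" "1 - w \<in> Sigma_ideal" using g h good_def one_minus_unit by auto
    have "in_Sigma_pow (Suc 0) ((1-w)*l + (u-1)*m)" for l m
    proof -
      have "(u-1)*m = (1-u)*(-m)" by algebra
      then show ?thesis
        using in_Sigma_pow.add[OF in_Sigma_pow.prod[OF su(2) in_Sigma_pow.pow0]
                                  in_Sigma_pow.prod[OF su(1) in_Sigma_pow.pow0]] by metis
    qed
    then show "c \<in> S (Suc 0)" using comm_S[OF g(1) h(1)] c g h by blast
  qed
next
  case (Suc j)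
  show ?case
  proof (rule gen_S[of _ "Suc j"])
    show "M \<in> generate GL2 {g \<otimes>\<^bsub>GL2\<^esub> h \<otimes>\<^bsub>GL2\<^esub> inv\<^bsub>GL2\<^esub> g \<otimes>\<^bsub>GL2\<^esub> inv\<^bsub>GL2\<^esub> h | g h. g \<in> FR \<and> h \<in> LCS (Suc (Suc j))}"
      using Suc.prems by simp
  next
    fix c assume "c \<in> {g \<otimes>\<^bsub>GL2\<^esub> h \<otimes>\<^bsub>GL2\<^esub> inv\<^bsub>GL2\<^esub> g \<otimes>\<^bsub>GL2\<^esub> inv\<^bsub>GL2\<^esub> h | g h. g \<in> FR \<and> h \<in> LCS (Suc (Suc j))}"
    then obtain g h where c: "c = g \<otimes>\<^bsub>GL2\<^esub> h \<otimes>\<^bsub>GL2\<^esub> inv\<^bsub>GL2\<^esub> g \<otimes>\<^bsub>GL2\<^esub> inv\<^bsub>GL2\<^esub> h"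
      and gh: "g \<in> FR" "h \<in> LCS (Suc (Suc j))" by auto
    obtain u l1 l2 where g: "good u l1 l2" "g = E u l1 l2" using FR_A gh by blast
    obtain m1 m2 where h: "in_Sigma_pow (Suc j) m1" "in_Sigma_pow (Suc j) m2"
      "m1*(1-X)+m2*(1-Y) = 0" "h = E 1 m1 m2"
      using Suc.IH[OF gh(2)] unfolding S_def by blast
    have hg: "good 1 m1 m2" using h pos_unit_one good_def by simp
    have su: "1 - u \<in> Sigma_ideal" using g good_def one_minus_unit by auto
    have "in_Sigma_pow (Suc (Suc j)) ((1-1)*l + (u-1)*m)" if "in_Sigma_pow (Suc j) m" for l m
    proof -
      have "(1-1)*l + (u-1)*m = (1-u)*(-m)" by algebra
      then show ?thesis using in_Sigma_pow.prod[OF su Sigma_neg[OF that]] by metis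
    qed
    then show "c \<in> S (Suc (Suc j))" using comm_S[OF g(1) hg] c g h by blast
  qed
qed

lemma pow_E:
  assumes c: "l1*(1-X)+l2*(1-Y) = 1-u"
  shows "(E u l1 l2) [^]\<^bsub>Mat2\<^esub> n = E (u^n) ((\<Sum>k<n. u^k)*l1) ((\<Sum>k<n. u^k)*l2)"
proof (induction n)
  case 0
  then show ?case using E_one by (simp add: Mat2_def)
next
  case (Suc n)
  have "(E u l1 l2) [^]\<^bsub>Mat2\<^esub> Suc n = mmul (E (u^n) ((\<Sum>k<n. u^k)*l1) ((\<Sum>k<n. u^k)*l2)) (E u l1 l2)"
    using Suc by (simp add: Mat2_def)
  also have "\<dots> = E (u^Suc n) ((\<Sum>k<Suc n. u^k)*l1) ((\<Sum>k<Suc n. u^k)*l2)"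
    unfolding E_mult[OF c] by (simp add: algebra_simps)
  finally show ?case .
qed

lemma cancel_XY: "(a::laurent) * (1 - Y) = b * (1 - Y) \<Longrightarrow> a = b"
                 "(a::laurent) * (1 - X) = b * (1 - X) \<Longrightarrow> a = b"
proof -
  have "Y \<noteq> 1" unfolding Y_def one_single[symmetric]
    by (metis lookup_single_eq lookup_single_not_eq prod.inject zero_neq_one)
  moreover have "X \<noteq> 1" unfolding X_def one_single[symmetric]
    by (metis lookup_single_eq lookup_single_not_eq prod.inject zero_neq_one)
  ultimately show "(a::laurent) * (1 - Y) = b * (1 - Y) \<Longrightarrow> a = b"
                  "(a::laurent) * (1 - X) = b * (1 - X) \<Longrightarrow> a = b" by auto
qed

theorem lemma2:
  fixes M :: mat2 and u l1 l2 :: laurent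
  assumes "M \<in> FR"
    and "pos_unit u"
    and "M = madd (msmult u mid) (Nmat l1 l2)"
    and "l1 * (1 - X) + l2 * (1 - Y) = 1 - u"
  shows "(\<forall>n::nat. n > 1 \<longrightarrow>
            M [^]\<^bsub>Mat2\<^esub> n = madd (msmult (u ^ n) mid) (msmult (\<Sum>k<n. u ^ k) (Nmat l1 l2)))
       \<and> (\<forall>j::nat. j \<ge> 1 \<longrightarrow> M \<in> LCS j \<longrightarrow> l1 \<in> Sigma_pow (j - 1) \<and> l2 \<in> Sigma_pow (j - 1))"
proof -
  have ME: "M = E u l1 l2" using assms(3) unfolding E_def .
  have P1: "\<forall>n::nat. n > 1 \<longrightarrow>
            M [^]\<^bsub>Mat2\<^esub> n = madd (msmult (u ^ n) mid) (msmult (\<Sum>k<n. u ^ k) (Nmat l1 l2))"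
  proof (intro allI impI)
    fix n :: nat
    have "msmult (\<Sum>k<n. u ^ k) (Nmat l1 l2) = Nmat ((\<Sum>k<n. u ^ k)*l1) ((\<Sum>k<n. u ^ k)*l2)"
      unfolding Nmat_def msmult.simps mult.assoc ..
    moreover have "M [^]\<^bsub>Mat2\<^esub> n = E (u^n) ((\<Sum>k<n. u^k)*l1) ((\<Sum>k<n. u^k)*l2)"
      unfolding ME by (rule pow_E[OF assms(4)])
    ultimately show "M [^]\<^bsub>Mat2\<^esub> n = madd (msmult (u ^ n) mid) (msmult (\<Sum>k<n. u ^ k) (Nmat l1 l2))"
      by (simp only: E_def)
  qed
  have P2: "\<forall>j::nat. j \<ge> 1 \<longrightarrow> M \<in> LCS j \<longrightarrow> l1 \<in> Sigma_pow (j - 1) \<and> l2 \<in> Sigma_pow (j - 1)"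
  proof (intro allI impI)
    fix j :: nat assume j: "j \<ge> 1" and M: "M \<in> LCS j"
    show "l1 \<in> Sigma_pow (j - 1) \<and> l2 \<in> Sigma_pow (j - 1)"
    proof (cases "j = 1")
      case True then show ?thesis unfolding Sigma_pow_def using in_Sigma_pow.pow0 by simp
    next
      case False
      define j' where "j' = j - 2"
      have jj: "j = Suc (Suc j')" using j False unfolding j'_def by simp
      have Mj: "M \<in> LCS (Suc (Suc j'))" using M unfolding jj .
      have "M \<in> S (Suc j')" by (rule LCS_S[OF Mj])
      then obtain m1 m2 where m: "in_Sigma_pow (Suc j') m1" "in_Sigma_pow (Suc j') m2" "M = E 1 m1 m2"
        unfolding S_def by blast
      have "E u l1 l2 = E 1 m1 m2" using trans[OF sym[OF ME] m(3)] .
      then have e: "l1 * (1 - Y) = m1 * (1 - Y) \<and> l2 * (1 - X) = m2 * (1 - X)"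
        unfolding E_eq mat2.inject by blast
      have "l1 = m1" using e cancel_XY(1) by blast
      moreover have "l2 = m2" using e cancel_XY(2) by blast
      moreover have "j - 1 = Suc j'" using jj by simp
      ultimately show ?thesis using m unfolding Sigma_pow_def by simp
    qed
  qed
  show ?thesis using P1 P2 by blast
qed

end
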